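(* Let $A,B\in\mathrm{SL}_2\mathbb{Z}$ be noncommuting, well oriented, with $2\le\mathrm{tr}(A)<\mathrm{tr}(B)$. If $[ab]<[b^2]$, then $[ab^k]<[b^{k+1}]$ for every $k\ge1$.
   Context: Words are finite strings over $\{a,b\}$; $\phi$ is the homomorphism with $\phi(a)=A,\phi(b)=B$, and $[w]=\mathrm{tr}(\phi(w))$. Fixed points are for the Möbius action on $\partial\mathcal{H}=\mathbb{P}^1\mathbb{R}$; $\alpha^\pm$ ($\beta^\pm$) are the attracting/repelling fixed points of $A$ ($B$), both equal to the unique fixed point if parabolic. With $\partial\mathcal{H}$ cyclically ordered and $[\alpha,\beta]$ the closed counterclockwise interval from $\alpha$ to $\beta$, let $I^+=\{\alpha^+\}$ if $\alpha^+=\beta^+$, and otherwise the one of $[\alpha^+,\beta^+],[\beta^+,\alpha^+]$ mapped into itself by both $A$ and $B$ (if it exists); define $I^-$ likewise with $A^{-1},B^{-1},\alpha^-,\beta^-$. The pair is coherently oriented if both exist, and well oriented if $A,B$ is coherently oriented but $A,B^{-1}$ is not. *)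

theory Defs
  imports "HOL-Analysis.Analysis"
begin

definition SL2Z :: "(int^2^2) set" where
  "SL2Z = {A. det A = 1}"

datatype letter = La | Lb

definition phi :: "int^2^2 \<Rightarrow> int^2^2 \<Rightarrow> letter list \<Rightarrow> int^2^2" where
  "phi A B w = foldr (\<lambda>l M. (case l of La \<Rightarrow> A | Lb \<Rightarrow> B) ** M) w (mat 1)"

text \<open>[w] = tr(phi(w)).\<close>
definition wtr :: "int^2^2 \<Rightarrow> int^2^2 \<Rightarrow> letter list \<Rightarrow> int" where
  "wtr A B w = trace (phi A B w)"

text \<open>Inverse of a matrix of determinant 1 (adjugate).\<close>
definition sl2inv :: "int^2^2 \<Rightarrow> int^2^2" where
  "sl2inv A = (\<chi> i j. if i = 1 \<and> j = 1 then A$2$2 else if i = 2 \<and> j = 2 then A$1$1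
                       else - A$i$j)"

datatype rp1 = Fin real | Infty

text \<open>Point of P^1(R) represented by a nonzero vector (x,y), i.e. x/y.\<close>
definition pt :: "real^2 \<Rightarrow> rp1" where
  "pt v = (if v$2 = 0 then Infty else Fin (v$1 / v$2))"

definition realm :: "int^2^2 \<Rightarrow> real^2^2" where
  "realm A = (\<chi> i j. real_of_int (A$i$j))"

fun mob :: "int^2^2 \<Rightarrow> rp1 \<Rightarrow> rp1" where
  "mob A (Fin x) = (if real_of_int (A$2$1) * x + real_of_int (A$2$2) = 0 then Infty
      else Fin ((real_of_int (A$1$1) * x + real_of_int (A$1$2)) /
                (real_of_int (A$2$1) * x + real_of_int (A$2$2))))"
| "mob A Infty = (if A$2$1 = 0 then Infty
      else Fin (real_of_int (A$1$1) / real_of_int (A$2$1)))"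

text \<open>For hyperbolic A these are
  the attracting and repelling fixed points; for parabolic A both equal the unique
  fixed point.\<close>
definition attr :: "int^2^2 \<Rightarrow> rp1" where
  "attr A = (THE p. \<exists>v c. v \<noteq> 0 \<and> realm A *v v = c *\<^sub>R v \<and> \<bar>c\<bar> \<ge> 1 \<and> p = pt v)"

definition repl :: "int^2^2 \<Rightarrow> rp1" where
  "repl A = (THE p. \<exists>v c. v \<noteq> 0 \<and> realm A *v v = c *\<^sub>R v \<and> \<bar>c\<bar> \<le> 1 \<and> p = pt v)"

text \<open>Linear order cutting the circle R \<union> {\<infinity>} at \<infinity>; going along it is
  counterclockwise (increasing real direction).\<close>
fun rle :: "rp1 \<Rightarrow> rp1 \<Rightarrow> bool" where
  "rle Infty _ = True"
| "rle (Fin x) Infty = False"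
| "rle (Fin x) (Fin y) = (x \<le> y)"

text \<open>Closed counterclockwise interval from a to b.\<close>
definition cinterval :: "rp1 \<Rightarrow> rp1 \<Rightarrow> rp1 set" where
  "cinterval a b = (if rle a b then {x. rle a x \<and> rle x b} else {x. rle a x \<or> rle x b})"

definition invariant_interval :: "int^2^2 \<Rightarrow> int^2^2 \<Rightarrow> rp1 \<Rightarrow> rp1 \<Rightarrow> bool" where
  "invariant_interval A B a b \<longleftrightarrow>
     mob A ` cinterval a b \<subseteq> cinterval a b \<and> mob B ` cinterval a b \<subseteq> cinterval a b"

definition Iplus_exists :: "int^2^2 \<Rightarrow> int^2^2 \<Rightarrow> bool" where
  "Iplus_exists A B \<longleftrightarrow> attr A = attr B \<or>
     invariant_interval A B (attr A) (attr B) \<or> invariant_interval A B (attr B) (attr A)"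

definition Iminus_exists :: "int^2^2 \<Rightarrow> int^2^2 \<Rightarrow> bool" where
  "Iminus_exists A B \<longleftrightarrow> repl A = repl B \<or>
     invariant_interval (sl2inv A) (sl2inv B) (repl A) (repl B) \<or>
     invariant_interval (sl2inv A) (sl2inv B) (repl B) (repl A)"

definition coherently_oriented :: "int^2^2 \<Rightarrow> int^2^2 \<Rightarrow> bool" where
  "coherently_oriented A B \<longleftrightarrow> Iplus_exists A B \<and> Iminus_exists A B"

definition well_oriented :: "int^2^2 \<Rightarrow> int^2^2 \<Rightarrow> bool" where
  "well_oriented A B \<longleftrightarrow> coherently_oriented A B \<and> \<not> coherently_oriented A (sl2inv B)"

end

theory Submission
  imports Defs
begin

lemma rec2:
  fixes M N B :: "int^2^2"
  assumes "det B = 1"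
  shows "trace (M ** (B ** (B ** N))) = trace B * trace (M ** (B ** N)) - trace (M ** N)"
proof -
  have h: "B$1$1 * B$2$2 - B$1$2 * B$2$1 = 1" using assms by (simp add: det_2)
  show ?thesis unfolding trace_def matrix_matrix_mult_def
    by (simp add: sum_2) (use h in algebra)
qed

lemma phi_cons: "phi A B (l # w) = (case l of La \<Rightarrow> A | Lb \<Rightarrow> B) ** phi A B w"
  by (simp add: phi_def)

theorem lemma5p4:
  fixes A B :: "int^2^2"
  assumes "A \<in> SL2Z" and "B \<in> SL2Z"
    and "A ** B \<noteq> B ** A"
    and "well_oriented A B"
    and "2 \<le> trace A" and "trace A < trace B"
    and "wtr A B [La, Lb] < wtr A B [Lb, Lb]"
  shows "\<forall>k\<ge>1. wtr A B (La # replicate k Lb) < wtr A B (replicate (k + 1) Lb)"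
proof -
  define P where "P k = phi A B (replicate k Lb)" for k
  have PS: "P (Suc k) = B ** P k" for k by (simp add: P_def phi_cons)
  have P0: "P 0 = mat 1" by (simp add: P_def phi_def)
  have dB: "det B = 1" using assms(2) by (simp add: SL2Z_def)
  define t where "t = trace B"
  define d where "d k = trace (B ** P k) - trace (A ** P k)" for k
  have drec: "d (k+2) = t * d (k+1) - d k" for k
    using rec2[OF dB, of B "P k"] rec2[OF dB, of A "P k"]
    by (simp add: d_def PS t_def algebra_simps)
  have d0: "d 0 = trace B - trace A" by (simp add: d_def P0)
  have d1: "d 1 = wtr A B [Lb, Lb] - wtr A B [La, Lb]"
    by (simp add: d_def wtr_def phi_def PS P0 matrix_mul_assoc)
  have d1p: "d 1 \<ge> 1" using d1 assms(7) by simp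
  have t3: "t \<ge> 3" using assms(5,6) t_def by simp
  have "(t - 1) * 1 \<le> (t - 1) * d 1" using d1p t3 by (intro mult_left_mono) auto
  hence d2: "d 2 > d 1" using drec[of 0] d0 assms(5) t_def by (simp add: algebra_simps numeral_2_eq_2)
  have main: "0 < d (k+1) \<and> d (k+1) < d (k+2)" for k
  proof (induction k)
    case 0 then show ?case using d1p d2 by (simp add: numeral_2_eq_2)
  next
    case (Suc k)
    have ih: "0 < d (k+1)" "d (k+1) < d (k+2)" using Suc.IH by auto
    have m0: "3 * d (k+2) \<le> t * d (k+2)" using ih t3 by (intro mult_right_mono) auto
    have r: "d (k+3) = t * d (k+2) - d (k+1)" using drec[of "k+1"] by (simp add: numeral_3_eq_3 numeral_2_eq_2)
    have "d (k+2) < d (k+3)" using m0 r ih by linarith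
    then show ?case using Suc by (simp add: numeral_3_eq_3 numeral_2_eq_2)
  qed
  show ?thesis
  proof (intro allI impI)
    fix k :: nat assume "k \<ge> 1"
    then obtain j where k: "k = j + 1" by (metis add.commute le_Suc_ex)
    have "d k > 0" using main[of j] k by simp
    moreover have "wtr A B (La # replicate k Lb) = trace (A ** P k)"
      by (simp add: wtr_def phi_cons P_def)
    moreover have "wtr A B (replicate (k + 1) Lb) = trace (B ** P k)"
      by (simp add: wtr_def phi_cons P_def)
    ultimately show "wtr A B (La # replicate k Lb) < wtr A B (replicate (k + 1) Lb)"
      by (simp add: d_def)
  qed
qed

end
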